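(* Let $d$ be an odd prime and $\Omega$, $\Pi^j_k$ as in the context. For every $\rho\in\Omega$, and in particular for every fiducial state $\rho=|\phi\rangle\langle\phi|$, one has $$\mathrm{Tr}(\rho\Pi^j_k)\le\frac1d+\frac{d-1}{d}\sqrt{\frac{1}{d+1}}$$ for all $j=0,\dots,d$ and $k=0,\dots,d-1$.
   Context: Let $d$ be an odd prime and $\omega=e^{2\pi i/d}$; for real $x$, $\omega^{x}$ means $e^{2\pi i x/d}$. Let $\{|k\rangle\}_{k=0}^{d-1}$ be the computational basis of $\mathbb{C}^d$, with indices taken modulo $d$. Let $X|k\rangle=|k+1\rangle$ and $Z|k\rangle=\omega^k|k\rangle$, and $\tau=-e^{i\pi/d}$. For $\mathbf p=(p_1,p_2)\in\mathbb{Z}_d^2$ set $D_{\mathbf p}=\tau^{p_1p_2}X^{p_1}Z^{p_2}$. For $j\in\{0,\dots,d-1\}$, let $\Pi^j_k$ be the rank-one projector onto the eigenvector of $D_{(1,j)}$ with eigenvalue $\omega^k$. Let $\Pi^d_k=|k\rangle\langle k|$. These $d+1$ bases are mutually unbiased. A unit vector $|\phi\rangle$ is fiducial if $|\langle\phi|D_{\mathbf p}|\phi\rangle|^2=\frac1{d+1}$ for all $\mathbf p\neq(0,0)$. $\Omega$ denotes the set of all operators $\rho=\sum_{j=0}^{d}\sum_{k=0}^{d-1}\big(p^j_k-\tfrac{1}{d+1}\big)\Pi^j_k$ with $p^j_k=\frac1d+\frac{1}{d\sqrt{d+1}}\sum_{r=1}^{d-1}\omega^{\alpha^j_r+kr}$,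 where the $\alpha^j_r\in\mathbb{R}$ ($j=0,\dots,d$, $r=1,\dots,d-1$) satisfy $\alpha^j_{d-r}=-\alpha^j_r$. *)

theory Defs
  imports "HOL-Analysis.Analysis" "Jordan_Normal_Form.Matrix"
begin

text \<open>Operators on C^d are represented as complex d x d matrices (Jordan_Normal_Form),
  vectors as complex vectors of dimension d; indices of the computational basis
  are 0..d-1 and are taken modulo d.\<close>

definition omega :: "nat \<Rightarrow> complex" where
  "omega d = exp (2 * pi * \<i> / of_nat d)"

definition omega_pow :: "nat \<Rightarrow> real \<Rightarrow> complex" where
  "omega_pow d x = exp (2 * pi * \<i> * complex_of_real x / of_nat d)"

definition tau :: "nat \<Rightarrow> complex" where
  "tau d = - exp (\<i> * pi / of_nat d)"

definition shiftX :: "nat \<Rightarrow> complex mat" where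
  "shiftX d = mat d d (\<lambda>(a, b). if a = (b + 1) mod d then 1 else 0)"

definition clockZ :: "nat \<Rightarrow> complex mat" where
  "clockZ d = mat d d (\<lambda>(a, b). if a = b then omega d ^ a else 0)"

definition displ :: "nat \<Rightarrow> nat \<times> nat \<Rightarrow> complex mat" where
  "displ d p = tau d ^ (fst p * snd p) \<cdot>\<^sub>m (shiftX d ^\<^sub>m fst p * clockZ d ^\<^sub>m snd p)"

definition unit_vec_d :: "nat \<Rightarrow> complex vec \<Rightarrow> bool" where
  "unit_vec_d d v \<longleftrightarrow> v \<in> carrier_vec d \<and> (\<Sum>i<d. (cmod (v $ i))\<^sup>2) = 1"

definition proj :: "nat \<Rightarrow> complex vec \<Rightarrow> complex mat" where
  "proj d v = mat d d (\<lambda>(a, b). v $ a * cnj (v $ b))"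

definition mtrace :: "nat \<Rightarrow> complex mat \<Rightarrow> complex" where
  "mtrace d A = (\<Sum>i<d. A $$ (i, i))"

text \<open>Pi^j_k: for j < d the rank-one projector onto a (normalised) eigenvector of
  D_(1,j) with eigenvalue omega^k (the eigenspace is one-dimensional, so this does not
  depend on the choice); for j = d the projector |k><k|.\<close>
definition mub_proj :: "nat \<Rightarrow> nat \<Rightarrow> nat \<Rightarrow> complex mat" where
  "mub_proj d j k =
    (if j = d then proj d (unit_vec d k)
     else proj d (SOME v. unit_vec_d d v \<and> displ d (1, j) *\<^sub>v v = omega d ^ k \<cdot>\<^sub>v v))"

definition pjk :: "nat \<Rightarrow> (nat \<Rightarrow> nat \<Rightarrow> real) \<Rightarrow> nat \<Rightarrow> nat \<Rightarrow> complex" where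
  "pjk d \<alpha> j k = 1 / of_nat d + 1 / (of_nat d * complex_of_real (sqrt (real d + 1))) *
       (\<Sum>r\<in>{1..d-1}. omega_pow d (\<alpha> j r + real (k * r)))"

definition rho_of :: "nat \<Rightarrow> (nat \<Rightarrow> nat \<Rightarrow> real) \<Rightarrow> complex mat" where
  "rho_of d \<alpha> = mat d d (\<lambda>(a, b). \<Sum>j\<in>{0..d}. \<Sum>k\<in>{0..<d}.
       (pjk d \<alpha> j k - 1 / (of_nat d + 1)) * mub_proj d j k $$ (a, b))"

definition Omega :: "nat \<Rightarrow> complex mat set" where
  "Omega d = {rho_of d \<alpha> | \<alpha>. \<forall>j\<le>d. \<forall>r\<in>{1..d-1}. \<alpha> j (d - r) = - \<alpha> j r}"

definition fiducial :: "nat \<Rightarrow> complex vec \<Rightarrow> bool" where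
  "fiducial d \<phi> \<longleftrightarrow> unit_vec_d d \<phi> \<and>
     (\<forall>p1<d. \<forall>p2<d. (p1, p2) \<noteq> (0, 0) \<longrightarrow>
        (cmod (conjugate \<phi> \<bullet> (displ d (p1, p2) *\<^sub>v \<phi>)))\<^sup>2 = 1 / (real d + 1))"

end

theory Submission
  imports Defs
begin


definition ee :: "nat \<Rightarrow> int \<Rightarrow> complex" where
  "ee d x = exp (2 * pi * \<i> * of_int x / of_nat d)"

lemma ee_add: "ee d (x + y) = ee d x * ee d y"
  unfolding ee_def by (simp add: exp_add[symmetric] distrib_left add_divide_distrib)

lemma ee_zero[simp]: "ee d 0 = 1" unfolding ee_def by simp

lemma ee_dmult: assumes "d > 0" shows "ee d (int d * m) = 1"
proof -
  have "2 * pi * \<i> * of_int (int d * m) / of_nat d = (2 * of_int m * pi) * \<i>"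
    using assms by (simp add: field_simps)
  moreover have "exp ((2 * of_int m * pi) * \<i>) = 1"
    by (rule exp_integer_2pi) simp
  ultimately show ?thesis unfolding ee_def by simp
qed

lemma ee_mod: assumes "d > 0" shows "ee d (x mod int d) = ee d x"
proof -
  have "x = x mod int d + int d * (x div int d)" by simp
  then have "ee d x = ee d (x mod int d) * ee d (int d * (x div int d))"
    by (metis ee_add)
  then show ?thesis using ee_dmult[OF assms] by simp
qed

lemma ee_cong: assumes "d > 0" "x mod int d = y mod int d" shows "ee d x = ee d y"
  by (metis assms ee_mod)

lemma ee_minus: "ee d (- x) = inverse (ee d x)"
  unfolding ee_def by (simp add: exp_minus[symmetric])

lemma cmod_ee[simp]: "cmod (ee d x) = 1"
  unfolding ee_def by (simp add: norm_exp_eq_Re)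

lemma cnj_ee: "cnj (ee d x) = ee d (- x)"
proof -
  have "cnj (ee d x) * ee d x = 1" using cmod_ee[of d x]
    by (metis complex_norm_square mult.commute of_real_1 power_one)
  moreover have "ee d x \<noteq> 0" unfolding ee_def by simp
  ultimately show ?thesis by (simp add: ee_minus field_simps)
qed

lemma ee_eq_1_iff: assumes "d > 0" shows "ee d x = 1 \<longleftrightarrow> int d dvd x"
proof
  assume "int d dvd x" then obtain m where "x = int d * m" by auto
  then show "ee d x = 1" using ee_dmult[OF assms] by simp
next
  assume "ee d x = 1"
  then obtain n :: int where n: "Im (2 * pi * \<i> * of_int x / of_nat d) = of_int (2 * n) * pi"
    unfolding ee_def exp_eq_1 by blast
  then have "2 * pi * of_int x / real d = 2 * pi * of_int n" by simp
  then have "real_of_int x = real d * of_int n" using assms by (simp add: field_simps)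
  then have "x = int d * n" by (metis of_int_eq_iff of_int_mult of_int_of_nat_eq)
  then show "int d dvd x" by simp
qed

lemma ee_pow: "ee d x ^ n = ee d (int n * x)"
  by (induction n) (simp_all add: ee_add[symmetric] algebra_simps)

lemma omega_ee: "omega d ^ n = ee d (int n)"
proof -
  have "omega d = ee d 1" unfolding omega_def ee_def by simp
  then show ?thesis by (simp add: ee_pow)
qed

lemma tau_ee: assumes "odd d" shows "tau d = ee d (int ((d + 1) div 2))"
proof -
  have "2 * pi * \<i> * of_int (int ((d + 1) div 2)) / of_nat d = \<i> * pi + \<i> * pi / of_nat d"
  proof -
    have "real ((d + 1) div 2) * 2 = real d + 1"
    proof -
      have "(d + 1) div 2 * 2 = d + 1" using assms by (metis odd_even_add odd_one dvd_div_mult_self)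
      then show ?thesis by (metis of_nat_1 of_nat_add of_nat_mult of_nat_numeral)
    qed
    then have "2 * pi * real ((d + 1) div 2) = pi * (real d + 1)" by (simp add: algebra_simps)
    moreover have "d > 0" using assms by (cases d) auto
    ultimately have "2 * pi * real ((d + 1) div 2) / real d = pi + pi / real d" by (simp add: field_simps)
    then have "complex_of_real (2 * pi * real ((d + 1) div 2) / real d) = complex_of_real (pi + pi / real d)" by simp
    then have "complex_of_real (2 * pi * real ((d + 1) div 2) / real d) * \<i> = complex_of_real (pi + pi / real d) * \<i>" by simp
    then show ?thesis by (simp add: algebra_simps)
  qed
  then show ?thesis unfolding tau_def ee_def by (simp add: exp_add)
qed

lemma ee_geom: assumes "d > 0"
  shows "(\<Sum>t<d. ee d (int t * m)) = (if int d dvd m then of_nat d else 0)"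
proof (cases "int d dvd m")
  case True
  then have "ee d (int t * m) = 1" for t using assms ee_eq_1_iff by auto
  then show ?thesis using True by simp
next
  case False
  then have ne: "ee d m \<noteq> 1" using ee_eq_1_iff[OF assms] by simp
  have "(\<Sum>t<d. ee d (int t * m)) = (\<Sum>t<d. ee d m ^ t)" by (simp add: ee_pow)
  also have "\<dots> = (1 - ee d m ^ d) / (1 - ee d m)" using ne by (simp add: sum_gp_strict)
  also have "ee d m ^ d = 1" using ee_dmult[OF assms] by (simp add: ee_pow mult.commute)
  finally show ?thesis using False by simp
qed



lemma sum_delta_lt: "t < (d::nat) \<Longrightarrow> (\<Sum>c<d. if c = t then f c else 0) = (f t :: 'a::comm_monoid_add)"
  by (subst sum.delta) auto

lemma mult_entry: assumes "A \<in> carrier_mat d d" "B \<in> carrier_mat d d" "i < d" "j < d"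
  shows "(A * B) $$ (i, j) = (\<Sum>c<d. A $$ (i, c) * B $$ (c, j))"
  using assms by (simp add: scalar_prod_def lessThan_atLeast0)

lemma shiftX_carrier[simp]: "shiftX d \<in> carrier_mat d d" unfolding shiftX_def by simp
lemma clockZ_carrier[simp]: "clockZ d \<in> carrier_mat d d" unfolding clockZ_def by simp

lemma shiftX_entry: "i < d \<Longrightarrow> b < d \<Longrightarrow> shiftX d $$ (i, b) = (if i = (b + 1) mod d then 1 else 0)"
  unfolding shiftX_def by simp
lemma clockZ_entry: "i < d \<Longrightarrow> b < d \<Longrightarrow> clockZ d $$ (i, b) = (if i = b then ee d (int i) else 0)"
  unfolding clockZ_def by (simp add: omega_ee)

lemma mult_vec_entry: assumes "A \<in> carrier_mat d d" "v \<in> carrier_vec d" "i < d"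
  shows "(A *\<^sub>v v) $ i = (\<Sum>c<d. A $$ (i, c) * v $ c)"
  using assms by (simp add: scalar_prod_def lessThan_atLeast0)

lemma mod_suc_inj: assumes "b < d" "b' < d" "(b + n) mod d = (b' + n) mod (d::nat)" shows "b = b'"
proof -
  have "(int b + int n) mod int d = (int b' + int n) mod int d" using assms(3)
    by (metis of_nat_add zmod_int)
  then have "int d dvd int b - int b'" by (simp add: mod_eq_dvd_iff)
  show ?thesis
  proof (rule ccontr)
    assume "b \<noteq> b'"
    then have "int b - int b' \<noteq> 0" by simp
    from dvd_imp_le_int[OF this \<open>int d dvd int b - int b'\<close>]
    have "int d \<le> \<bar>int b - int b'\<bar>" by simp
    then show False using assms(1,2) by arith
  qed
qed

lemma shiftX_pow: assumes "i < d" "b < d"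
  shows "(shiftX d ^\<^sub>m n) $$ (i, b) = (if i = (b + n) mod d then 1 else 0)"
  using assms
proof (induction n arbitrary: i b)
  case 0
  then show ?case unfolding shiftX_def by simp
next
  case (Suc n)
  have car: "shiftX d ^\<^sub>m n \<in> carrier_mat d d" by simp
  have "(shiftX d ^\<^sub>m Suc n) $$ (i, b) = (\<Sum>c<d. (shiftX d ^\<^sub>m n) $$ (i, c) * shiftX d $$ (c, b))"
    using Suc.prems car by (simp add: mult_entry)
  also have "\<dots> = (\<Sum>c<d. if c = (b + 1) mod d then (if i = (c + n) mod d then 1 else 0) else 0)"
    using Suc.prems by (intro sum.cong) (auto simp: Suc.IH shiftX_entry)
  also have "\<dots> = (if i = ((b + 1) mod d + n) mod d then 1 else 0)"
    using Suc.prems by (subst sum_delta_lt) auto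
  also have "((b + 1) mod d + n) mod d = (b + Suc n) mod d" by (simp add: mod_add_left_eq)
  finally show ?case .
qed

lemma clockZ_pow: assumes "i < d" "b < d"
  shows "(clockZ d ^\<^sub>m n) $$ (i, b) = (if i = b then ee d (int i * int n) else 0)"
  using assms
proof (induction n arbitrary: i b)
  case 0
  then show ?case unfolding clockZ_def by simp
next
  case (Suc n)
  have car: "clockZ d ^\<^sub>m n \<in> carrier_mat d d" by simp
  have "(clockZ d ^\<^sub>m Suc n) $$ (i, b) = (\<Sum>c<d. (clockZ d ^\<^sub>m n) $$ (i, c) * clockZ d $$ (c, b))"
    using Suc.prems car by (simp add: mult_entry)
  also have "\<dots> = (\<Sum>c<d. if c = i then (if i = b then ee d (int i * int n) * ee d (int i) else 0) else 0)"
    using Suc.prems by (intro sum.cong) (auto simp: Suc.IH clockZ_entry)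
  also have "\<dots> = (if i = b then ee d (int i * int (Suc n)) else 0)"
    using Suc.prems by (subst sum_delta_lt) (auto simp: ee_add[symmetric] algebra_simps)
  finally show ?case .
qed

lemma displ_carrier[simp]: "displ d p \<in> carrier_mat d d"
  unfolding displ_def by (simp add: mult_carrier_mat[of _ d d _ d] smult_carrier_mat)

lemma displ_entry: assumes "a < d" "b < d"
  shows "displ d (p1, p2) $$ (a, b) = (if a = (b + p1) mod d then tau d ^ (p1 * p2) * ee d (int b * int p2) else 0)"
proof -
  have "(shiftX d ^\<^sub>m p1 * clockZ d ^\<^sub>m p2) $$ (a, b)
      = (\<Sum>c<d. (shiftX d ^\<^sub>m p1) $$ (a, c) * (clockZ d ^\<^sub>m p2) $$ (c, b))"
    using assms by (simp add: mult_entry)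
  also have "\<dots> = (\<Sum>c<d. if c = b then (if a = (b + p1) mod d then ee d (int b * int p2) else 0) else 0)"
    using assms by (intro sum.cong) (auto simp: shiftX_pow clockZ_pow)
  also have "\<dots> = (if a = (b + p1) mod d then ee d (int b * int p2) else 0)"
    using assms by (subst sum_delta_lt) auto
  moreover have "shiftX d ^\<^sub>m p1 * clockZ d ^\<^sub>m p2 \<in> carrier_mat d d"
    by (simp add: mult_carrier_mat[of _ d d _ d])
  then have "dim_row (shiftX d ^\<^sub>m p1 * clockZ d ^\<^sub>m p2) = d" "dim_col (shiftX d ^\<^sub>m p1 * clockZ d ^\<^sub>m p2) = d"
    by auto
  ultimately show ?thesis using assms unfolding displ_def by (simp del: index_mult_mat)
qed

lemma displ_vec: assumes "a < d" "v \<in> carrier_vec d"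
  shows "(displ d (p1, p2) *\<^sub>v v) $ a = (\<Sum>b<d. (if a = (b + p1) mod d then tau d ^ (p1 * p2) * ee d (int b * int p2) else 0) * v $ b)"
  by (subst mult_vec_entry[OF displ_carrier assms(2,1)]) (intro sum.cong, auto simp: displ_entry assms)



definition TT :: "int \<Rightarrow> int" where "TT b = b * (b - 1) div 2"

lemma TT2: "2 * TT b = b * (b - 1)"
proof -
  have "even (b * (b - 1))" by simp
  then show ?thesis unfolding TT_def by simp
qed

lemma TT_add: "TT (x + y) = TT x + TT y + x * y"
proof -
  have "2 * TT (x + y) = 2 * (TT x + TT y + x * y)"
    by (simp only: TT2 distrib_left) (simp add: TT2 algebra_simps)
  then show ?thesis by simp
qed

lemma TT_0[simp]: "TT 0 = 0" unfolding TT_def by simp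

lemma TT_d: assumes "odd d" shows "TT (int d) = int d * ((int d - 1) div 2)"
proof -
  have "even (int d - 1)" using assms by simp
  then have h: "2 * ((int d - 1) div 2) = int d - 1" by (rule dvd_mult_div_cancel)
  have "2 * (int d * ((int d - 1) div 2)) = int d * (2 * ((int d - 1) div 2))" by simp
  also have "\<dots> = int d * (int d - 1)" using h by simp
  finally show ?thesis using TT2[of "int d"] by linarith
qed

lemma quad_periodic: assumes "odd d"
  shows "ee d (A * (x + int d) + B * TT (x + int d)) = ee d (A * x + B * TT x)"
proof -
  have d: "d > 0" using assms by (cases d) auto
  have "A * (x + int d) + B * TT (x + int d) = (A * x + B * TT x) + int d * (A + B * ((int d - 1) div 2) + B * x)"
    by (simp add: TT_add TT_d[OF assms] algebra_simps)
  then show ?thesis by (simp add: ee_add ee_dmult[OF d])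
qed

lemma periodic_shift_nat: assumes "\<And>x. F (x + int d) = F x" shows "F (x + int d * int n) = F x"
proof (induction n)
  case (Suc n)
  have "F (x + int d * int (Suc n)) = F ((x + int d * int n) + int d)" by (simp add: algebra_simps)
  then show ?case using assms Suc by simp
qed simp

lemma periodic_mod: assumes "\<And>x. F (x + int d) = F x" shows "F (x mod int d) = F x"
proof -
  have xm: "x mod int d = x - x div int d * int d" by (simp add: minus_div_mult_eq_mod)
  show ?thesis
  proof (cases "x div int d \<ge> 0")
    case True
    define n where "n = nat (x div int d)"
    have n: "x div int d = int n" using True n_def by simp
    have "F (x mod int d) = F (x mod int d + int d * int n)" by (rule periodic_shift_nat[where F=F, OF assms, symmetric])
    also have "x mod int d + int d * int n = x" using n xm by simp
    finally show ?thesis .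
  next
    case False
    define n where "n = nat (- (x div int d))"
    have n: "x div int d = - int n" using False n_def by simp
    have "F x = F (x + int d * int n)" by (rule periodic_shift_nat[where F=F, OF assms, symmetric])
    also have "x + int d * int n = x mod int d" using n xm by simp
    finally show ?thesis by simp
  qed
qed

lemma sum_shift: assumes d: "d > 0" and per: "\<And>x. F (x + int d) = F x"
  shows "(\<Sum>t<d. F (s + int t)) = (\<Sum>t<d. F (int t))"
proof -
  define g where "g t = nat ((s + int t) mod int d)" for t
  have g_lt: "g t < d" for t unfolding g_def using d
    by (simp add: nat_less_iff)
  have g_int: "int (g t) = (s + int t) mod int d" for t unfolding g_def using d by simp
  have inj: "inj_on g {..<d}"
  proof
    fix t t' assume t: "t \<in> {..<d}" "t' \<in> {..<d}" "g t = g t'"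
    then have "(s + int t) mod int d = (s + int t') mod int d" by (metis g_int)
    then have "int d dvd (s + int t) - (s + int t')" by (simp add: mod_eq_dvd_iff)
    then have dv: "int d dvd int t - int t'" by simp
    show "t = t'"
    proof (rule ccontr)
      assume "t \<noteq> t'"
      then have "int t - int t' \<noteq> 0" by simp
      from dvd_imp_le_int[OF this dv] have "int d \<le> \<bar>int t - int t'\<bar>" by simp
      then show False using t by auto
    qed
  qed
  have img: "g ` {..<d} = {..<d}"
    by (rule endo_inj_surj) (use inj g_lt in auto)
  have bij: "bij_betw g {..<d} {..<d}" using inj img by (simp add: bij_betw_def)
  have "(\<Sum>t<d. F (s + int t)) = (\<Sum>t<d. F (int (g t)))"
    by (intro sum.cong) (simp_all add: g_int periodic_mod[where F=F, OF per])
  also have "\<dots> = (\<Sum>t<d. F (int t))"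
    using sum.reindex_bij_betw[OF bij, of "\<lambda>t. F (int t)"] by simp
  finally show ?thesis .
qed

lemma gauss_sum:
  assumes "prime d" "odd d" "\<not> int d dvd B"
  shows "(\<Sum>b<d. ee d (A * int b + B * TT (int b))) * cnj (\<Sum>b<d. ee d (A * int b + B * TT (int b))) = of_nat d"
proof -
  have d: "d > 0" using assms prime_gt_0_nat by blast
  define q where "q x = A * x + B * TT x" for x
  have qper: "ee d (q (x + int d)) = ee d (q x)" for x unfolding q_def by (rule quad_periodic[OF assms(2)])
  have qdiff: "q (y + x) - q y = q x + y * (B * x)" for x y :: int
    unfolding q_def by (simp add: TT_add algebra_simps)
  have "(\<Sum>b<d. ee d (q (int b))) * cnj (\<Sum>b<d. ee d (q (int b)))
      = (\<Sum>b'<d. \<Sum>b<d. ee d (q (int b)) * ee d (- q (int b')))"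
    unfolding sum_product cnj_sum by (subst sum.swap) (simp add: cnj_ee)
  also have "\<dots> = (\<Sum>b'<d. \<Sum>b<d. ee d (q (int b) - q (int b')))"
    by (simp add: ee_add[symmetric])
  also have "\<dots> = (\<Sum>b'<d. \<Sum>t<d. ee d (q (int b' + int t) - q (int b')))"
  proof (rule sum.cong[OF refl])
    fix b' assume "b' \<in> {..<d}"
    have per: "ee d (q (x + int d) - q (int b')) = ee d (q x - q (int b'))" for x
      using qper[of x] by (simp only: diff_conv_add_uminus ee_add)
    show "(\<Sum>b<d. ee d (q (int b) - q (int b'))) = (\<Sum>t<d. ee d (q (int b' + int t) - q (int b')))"
      using sum_shift[OF d, of "\<lambda>x. ee d (q x - q (int b'))", OF per, of "int b'"] by simp
  qed
  also have "\<dots> = (\<Sum>b'<d. \<Sum>t<d. ee d (q (int t)) * ee d (int b' * (B * int t)))"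
    by (simp add: qdiff ee_add)
  also have "\<dots> = (\<Sum>t<d. ee d (q (int t)) * (\<Sum>b'<d. ee d (int b' * (B * int t))))"
    unfolding sum_distrib_left by (rule sum.swap)
  also have "\<dots> = (\<Sum>t<d. if t = 0 then of_nat d else 0)"
  proof (rule sum.cong[OF refl])
    fix t assume t: "t \<in> {..<d}"
    have "int d dvd B * int t \<longleftrightarrow> t = 0"
    proof
      assume "int d dvd B * int t"
      then have "int d dvd int t" using assms(1,3) by (simp add: prime_dvd_mult_iff)
      then show "t = 0" using t by (auto dest: zdvd_imp_le simp: of_nat_dvd_iff)
    qed simp
    then show "ee d (q (int t)) * (\<Sum>b'<d. ee d (int b' * (B * int t))) = (if t = 0 then of_nat d else 0)"
      by (simp add: ee_geom[OF d] q_def)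
  qed
  also have "\<dots> = of_nat d" using d by simp
  finally show ?thesis unfolding q_def .
qed



definition hh :: "nat \<Rightarrow> nat" where "hh d = (d + 1) div 2"

definition EE :: "nat \<Rightarrow> nat \<Rightarrow> nat \<Rightarrow> int \<Rightarrow> int" where
  "EE d j k x = (int (hh d) * int j - int k) * x + int j * TT x"

definition cvec :: "nat \<Rightarrow> nat \<Rightarrow> nat \<Rightarrow> complex vec" where
  "cvec d j k = vec d (\<lambda>b. ee d (EE d j k (int b)))"

lemma TT_1: "TT 1 = 0" by (simp add: TT_def)
lemma TT_Suc: "TT (x + 1) = TT x + x" using TT_add[of x 1] TT_1 by simp

lemma ee_nonzero[simp]: "ee d x \<noteq> 0" unfolding ee_def by simp

lemma displ_dims[simp]: "dim_row (displ d p) = d" "dim_col (displ d p) = d"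
  using displ_carrier[of d p] unfolding carrier_mat_def by auto

lemma EE_step: "EE d j k (x + 1) = EE d j k x + (int (hh d) * int j - int k + int j * x)"
  unfolding EE_def TT_Suc by (simp add: algebra_simps)

lemma EE_periodic: "odd d \<Longrightarrow> ee d (EE d j k (x + int d)) = ee d (EE d j k x)"
  unfolding EE_def by (rule quad_periodic)

lemma displ1_at: assumes "v \<in> carrier_vec d" "b < d"
  shows "(displ d (1, j) *\<^sub>v v) $ ((b + 1) mod d) = tau d ^ j * ee d (int b * int j) * v $ b"
proof -
  have lt: "(b + 1) mod d < d" using assms(2) by simp
  have "(displ d (1, j) *\<^sub>v v) $ ((b + 1) mod d)
     = (\<Sum>c<d. (if (b + 1) mod d = (c + 1) mod d then tau d ^ (1 * j) * ee d (int c * int j) else 0) * v $ c)"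
    by (rule displ_vec[OF lt assms(1)])
  also have "\<dots> = (\<Sum>c<d. if c = b then tau d ^ j * ee d (int c * int j) * v $ c else 0)"
  proof (rule sum.cong[OF refl])
    fix c assume "c \<in> {..<d}"
    then have "(b + 1) mod d = (c + 1) mod d \<longleftrightarrow> c = b" using mod_suc_inj[of b d c 1] assms(2) by auto
    then show "(if (b + 1) mod d = (c + 1) mod d then tau d ^ (1 * j) * ee d (int c * int j) else 0) * v $ c
        = (if c = b then tau d ^ j * ee d (int c * int j) * v $ c else 0)" by simp
  qed
  also have "\<dots> = tau d ^ j * ee d (int b * int j) * v $ b" using assms(2) by (rule sum_delta_lt)
  finally show ?thesis .
qed

lemma tau_pow: "odd d \<Longrightarrow> tau d ^ j = ee d (int (hh d) * int j)"
  by (simp add: tau_ee hh_def ee_pow mult.commute)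

lemma eigen_form:
  assumes odd: "odd d" and v: "v \<in> carrier_vec d" and eig: "displ d (1, j) *\<^sub>v v = omega d ^ k \<cdot>\<^sub>v v"
  shows "b < d \<Longrightarrow> v $ b = v $ 0 * ee d (EE d j k (int b))"
proof (induction b)
  case 0
  then show ?case by (simp add: EE_def TT_def)
next
  case (Suc b)
  then have b: "b < d" "(b + 1) mod d = Suc b" by auto
  have "(displ d (1, j) *\<^sub>v v) $ Suc b = tau d ^ j * ee d (int b * int j) * v $ b"
    using displ1_at[OF v b(1), of j] unfolding b(2) .
  then have e1: "omega d ^ k * v $ Suc b = tau d ^ j * ee d (int b * int j) * v $ b"
    unfolding eig using Suc.prems v by simp
  then have e2: "ee d (int k) * v $ Suc b = ee d (int (hh d) * int j + int b * int j) * v $ b"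
    by (simp add: omega_ee tau_pow[OF odd] ee_add)
  have "v $ Suc b = ee d (- int k) * (ee d (int k) * v $ Suc b)"
    by (simp add: mult.assoc[symmetric] ee_add[symmetric])
  also have "\<dots> = ee d (- int k) * ee d (int (hh d) * int j + int b * int j) * v $ b"
    using e2 by simp
  also have "\<dots> = ee d (int (hh d) * int j - int k + int j * int b) * v $ b"
    by (simp add: ee_add[symmetric] algebra_simps)
  also have "\<dots> = ee d (int (hh d) * int j - int k + int j * int b) * (v $ 0 * ee d (EE d j k (int b)))"
    using Suc.IH b(1) by simp
  also have "\<dots> = v $ 0 * ee d (EE d j k (int b + 1))"
    by (simp add: EE_step ee_add)
  finally show ?case by (simp add: add.commute)
qed

lemma cvec_eigen: assumes odd: "odd d"
  shows "displ d (1, j) *\<^sub>v cvec d j k = omega d ^ k \<cdot>\<^sub>v cvec d j k"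
proof (rule eq_vecI)
  have d: "d > 0" using odd by (cases d) auto
  have car: "cvec d j k \<in> carrier_vec d" unfolding cvec_def by simp
  show "dim_vec (displ d (1, j) *\<^sub>v cvec d j k) = dim_vec (omega d ^ k \<cdot>\<^sub>v cvec d j k)"
    using car by simp
  fix a assume "a < dim_vec (omega d ^ k \<cdot>\<^sub>v cvec d j k)"
  then have a: "a < d" using car by simp
  define b where "b = (a + d - 1) mod d"
  have b: "b < d" unfolding b_def using d by simp
  have ab: "(b + 1) mod d = a"
  proof (cases a)
    case 0
    then have "b = d - 1" unfolding b_def using d by simp
    then show ?thesis using d 0 by simp
  next
    case (Suc a')
    then have "b = a'" unfolding b_def using a by simp
    then show ?thesis using Suc a by simp
  qed
  have per: "ee d (EE d j k (int a)) = ee d (EE d j k (int b + 1))"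
  proof -
    have "int a = (int b + 1) mod int d" using ab by (metis of_nat_1 of_nat_add zmod_int)
    then show ?thesis using periodic_mod[where F="\<lambda>x. ee d (EE d j k x)", OF EE_periodic[OF odd]] by simp
  qed
  have "(displ d (1, j) *\<^sub>v cvec d j k) $ a = tau d ^ j * ee d (int b * int j) * cvec d j k $ b"
    using displ1_at[OF car b, of j] ab by simp
  also have "\<dots> = ee d (int (hh d) * int j + int b * int j + EE d j k (int b))"
    using b by (simp add: cvec_def tau_pow[OF odd] ee_add)
  also have "\<dots> = ee d (int k + EE d j k (int b + 1))"
    by (simp only: EE_step) (rule arg_cong[where f="ee d"], simp add: algebra_simps)
  also have "\<dots> = (omega d ^ k \<cdot>\<^sub>v cvec d j k) $ a"
    using a per by (simp add: cvec_def omega_ee ee_add)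
  finally show "(displ d (1, j) *\<^sub>v cvec d j k) $ a = (omega d ^ k \<cdot>\<^sub>v cvec d j k) $ a" .
qed

lemma eigen_exists: assumes odd: "odd d"
  shows "\<exists>v. unit_vec_d d v \<and> displ d (1, j) *\<^sub>v v = omega d ^ k \<cdot>\<^sub>v v"
proof -
  have d: "d > 0" using odd by (cases d) auto
  have car: "cvec d j k \<in> carrier_vec d" unfolding cvec_def by simp
  define v where "v = complex_of_real (1 / sqrt (real d)) \<cdot>\<^sub>v cvec d j k"
  have "unit_vec_d d v"
  proof -
    have "(\<Sum>i<d. (cmod (v $ i))\<^sup>2) = (\<Sum>i<d. 1 / real d)"
      by (rule sum.cong) (simp_all add: v_def cvec_def norm_mult norm_divide power_divide)
    also have "\<dots> = 1" using d by simp
    finally show ?thesis unfolding unit_vec_d_def v_def using car by simp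
  qed
  moreover have "displ d (1, j) *\<^sub>v v = omega d ^ k \<cdot>\<^sub>v v"
    unfolding v_def using cvec_eigen[OF odd, of j k] car
    by (simp add: mult_mat_vec[OF displ_carrier car] smult_smult_assoc mult.commute)
  ultimately show ?thesis by blast
qed



definition mvec :: "nat \<Rightarrow> nat \<Rightarrow> nat \<Rightarrow> complex vec" where
  "mvec d j k = (if j = d then unit_vec d k
     else (SOME v. unit_vec_d d v \<and> displ d (1, j) *\<^sub>v v = omega d ^ k \<cdot>\<^sub>v v))"

lemma mub_proj_mvec: "mub_proj d j k = proj d (mvec d j k)"
  unfolding mub_proj_def mvec_def by simp

lemma mvec_eig: assumes "odd d" "j \<noteq> d"
  shows "unit_vec_d d (mvec d j k) \<and> displ d (1, j) *\<^sub>v mvec d j k = omega d ^ k \<cdot>\<^sub>v mvec d j k"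
proof -
  have "mvec d j k = (SOME v. unit_vec_d d v \<and> displ d (1, j) *\<^sub>v v = omega d ^ k \<cdot>\<^sub>v v)"
    unfolding mvec_def by (rule if_not_P[OF assms(2)])
  then show ?thesis using someI_ex[OF eigen_exists[OF assms(1), of j k]] by (simp only:)
qed

lemma mvec_carrier: assumes "odd d" "k < d" shows "mvec d j k \<in> carrier_vec d"
proof (cases "j = d")
  case True
  then have "mvec d j k = unit_vec d k" unfolding mvec_def by (rule if_P)
  then show ?thesis by (simp only: unit_vec_carrier)
next
  case False
  have "unit_vec_d d (mvec d j k)" using mvec_eig[OF assms(1) False, of k] by (rule conjunct1)
  then show ?thesis unfolding unit_vec_d_def by (rule conjunct1)
qed

lemma mvec_form: assumes "odd d" "j \<noteq> d" "b < d"
  shows "mvec d j k $ b = mvec d j k $ 0 * ee d (EE d j k (int b))"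
proof -
  have "mvec d j k \<in> carrier_vec d" "displ d (1, j) *\<^sub>v mvec d j k = omega d ^ k \<cdot>\<^sub>v mvec d j k"
    using mvec_eig[OF assms(1,2), of k] unfolding unit_vec_d_def by (blast, blast)
  from eigen_form[OF assms(1) this assms(3)] show ?thesis .
qed

lemma mvec_0: assumes "odd d" "j \<noteq> d"
  shows "(cmod (mvec d j k $ 0))\<^sup>2 = 1 / real d"
proof -
  have d: "d > 0" using assms by (cases d) auto
  have "1 = (\<Sum>b<d. (cmod (mvec d j k $ b))\<^sup>2)"
    using mvec_eig[OF assms, of k] unfolding unit_vec_d_def by simp
  also have "\<dots> = (\<Sum>b<d. (cmod (mvec d j k $ 0))\<^sup>2)"
  proof (rule sum.cong[OF refl])
    fix b assume "b \<in> {..<d}"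
    then have "mvec d j k $ b = mvec d j k $ 0 * ee d (EE d j k (int b))" by (intro mvec_form[OF assms]) simp
    then show "(cmod (mvec d j k $ b))\<^sup>2 = (cmod (mvec d j k $ 0))\<^sup>2" by (simp add: norm_mult)
  qed
  also have "\<dots> = real d * (cmod (mvec d j k $ 0))\<^sup>2" by simp
  finally show ?thesis using d by (simp add: field_simps)
qed

definition ip :: "nat \<Rightarrow> complex vec \<Rightarrow> complex vec \<Rightarrow> complex" where
  "ip d u v = (\<Sum>b<d. cnj (u $ b) * v $ b)"

lemma proj_carrier[simp]: "proj d v \<in> carrier_mat d d" unfolding proj_def by simp

lemma proj_entry: "a < d \<Longrightarrow> b < d \<Longrightarrow> proj d v $$ (a, b) = v $ a * cnj (v $ b)"
  unfolding proj_def by simp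

lemma trace_proj: "mtrace d (proj d u * proj d v) = complex_of_real ((cmod (ip d u v))\<^sup>2)"
proof -
  have "mtrace d (proj d u * proj d v) = (\<Sum>a<d. \<Sum>c<d. (u $ a * cnj (u $ c)) * (v $ c * cnj (v $ a)))"
    unfolding mtrace_def
  proof (rule sum.cong[OF refl])
    fix a assume "a \<in> {..<d}"
    then have a: "a < d" by simp
    show "(proj d u * proj d v) $$ (a, a) = (\<Sum>c<d. (u $ a * cnj (u $ c)) * (v $ c * cnj (v $ a)))"
      unfolding mult_entry[OF proj_carrier proj_carrier a a]
      by (rule sum.cong[OF refl]) (simp add: proj_entry a)
  qed
  also have "\<dots> = (\<Sum>a<d. u $ a * cnj (v $ a)) * (\<Sum>c<d. cnj (u $ c) * v $ c)"
    by (simp add: sum_product) (intro sum.cong refl, simp add: algebra_simps)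
  also have "\<dots> = cnj (ip d u v) * ip d u v" unfolding ip_def by (simp add: mult.commute)
  also have "\<dots> = complex_of_real ((cmod (ip d u v))\<^sup>2)" by (simp only: complex_norm_square mult.commute)
  finally show ?thesis .
qed

lemma overlap:
  assumes p: "prime d" and odd: "odd d" and j: "j \<le> d" "j' \<le> d" and k: "k < d" "k' < d"
  shows "(cmod (ip d (mvec d j k) (mvec d j' k')))\<^sup>2 = (if j = j' then (if k = k' then 1 else 0) else 1 / real d)"
proof -
  have d: "d > 0" using odd by (cases d) auto
  consider "j = d" "j' = d" | "j = d" "j' \<noteq> d" | "j \<noteq> d" "j' = d" | "j \<noteq> d" "j' \<noteq> d" by blast
  then show ?thesis
  proof cases
    case 1
    have "ip d (mvec d j k) (mvec d j' k') = (\<Sum>b<d. if b = k then (if k = k' then 1 else 0) else 0)"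
      unfolding ip_def mvec_def using 1 k by (intro sum.cong) auto
    then show ?thesis using 1 k by (simp add: sum_delta_lt)
  next
    case 2
    have "ip d (mvec d j k) (mvec d j' k') = (\<Sum>b<d. if b = k then mvec d j' k' $ b else 0)"
      unfolding ip_def using 2 k by (intro sum.cong) (auto simp: mvec_def)
    also have "\<dots> = mvec d j' k' $ k" using k by (simp add: sum_delta_lt)
    finally show ?thesis using 2 k mvec_form[OF odd 2(2) k(1), of k'] mvec_0[OF odd 2(2), of k']
      by (simp add: norm_mult)
  next
    case 3
    have "ip d (mvec d j k) (mvec d j' k') = (\<Sum>b<d. if b = k' then cnj (mvec d j k $ b) else 0)"
      unfolding ip_def using 3 k by (intro sum.cong) (auto simp: mvec_def)
    also have "\<dots> = cnj (mvec d j k $ k')" using k by (simp add: sum_delta_lt)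
    finally show ?thesis using 3 k mvec_form[OF odd 3(1) k(2), of k] mvec_0[OF odd 3(1), of k]
      by (simp add: norm_mult)
  next
    case 4
    define A where "A = int (hh d) * (int j' - int j) - (int k' - int k)"
    define B where "B = int j' - int j"
    define G where "G = (\<Sum>b<d. ee d (A * int b + B * TT (int b)))"
    have "ip d (mvec d j k) (mvec d j' k') = cnj (mvec d j k $ 0) * mvec d j' k' $ 0 * G"
    proof -
      have "ip d (mvec d j k) (mvec d j' k') = (\<Sum>b<d. cnj (mvec d j k $ 0) * mvec d j' k' $ 0 * ee d (A * int b + B * TT (int b)))"
        unfolding ip_def
      proof (rule sum.cong[OF refl])
        fix b assume "b \<in> {..<d}"
        then have b: "b < d" by simp
        have "EE d j' k' (int b) - EE d j k (int b) = A * int b + B * TT (int b)"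
          unfolding EE_def A_def B_def by (simp add: algebra_simps)
        then have "cnj (ee d (EE d j k (int b))) * ee d (EE d j' k' (int b)) = ee d (A * int b + B * TT (int b))"
          by (simp add: cnj_ee ee_add[symmetric])
        then show "cnj (mvec d j k $ b) * mvec d j' k' $ b = cnj (mvec d j k $ 0) * mvec d j' k' $ 0 * ee d (A * int b + B * TT (int b))"
          using mvec_form[OF odd 4(1) b, of k] mvec_form[OF odd 4(2) b, of k'] by (simp add: algebra_simps)
      qed
      then show ?thesis unfolding G_def by (simp add: sum_distrib_left)
    qed
    then have ipn: "(cmod (ip d (mvec d j k) (mvec d j' k')))\<^sup>2 = 1 / real d * (1 / real d) * (cmod G)\<^sup>2"
      using mvec_0[OF odd 4(1), of k] mvec_0[OF odd 4(2), of k'] by (simp add: norm_mult power_mult_distrib)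
    show ?thesis
    proof (cases "j = j'")
      case True
      then have G: "G = (\<Sum>b<d. ee d (int b * (int k - int k')))"
        unfolding G_def A_def B_def by (intro sum.cong) (simp_all add: algebra_simps)
      have dv: "int d dvd (int k - int k') \<longleftrightarrow> k = k'"
      proof
        assume "int d dvd (int k - int k')"
        show "k = k'"
        proof (rule ccontr)
          assume "k \<noteq> k'"
          then have "int k - int k' \<noteq> 0" by simp
          from dvd_imp_le_int[OF this \<open>int d dvd (int k - int k')\<close>]
          show False using k by arith
        qed
      qed simp
      show ?thesis using ipn True d by (simp add: G ee_geom[OF d] dv power2_eq_square)
    next
      case False
      have "\<not> int d dvd B"
      proof
        assume "int d dvd B"
        moreover have "B \<noteq> 0" using False unfolding B_def by simp
        ultimately have "\<bar>int d\<bar> \<le> \<bar>B\<bar>" using dvd_imp_le_int by blast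
        then show False using j 4 unfolding B_def by arith
      qed
      then have "G * cnj G = of_nat d" unfolding G_def by (rule gauss_sum[OF p odd])
      then have "(cmod G)\<^sup>2 = real d" by (metis complex_norm_square of_real_eq_iff of_real_of_nat_eq)
      then show ?thesis using ipn False d by simp
    qed
  qed
qed



lemma omega_pow_add: "omega_pow d (x + y) = omega_pow d x * omega_pow d y"
  unfolding omega_pow_def by (simp add: exp_add[symmetric] distrib_left add_divide_distrib)

lemma omega_pow_nat: "omega_pow d (real n) = ee d (int n)"
  unfolding omega_pow_def ee_def by simp

lemma omega_pow_minus: "omega_pow d (- x) = inverse (omega_pow d x)"
  unfolding omega_pow_def by (simp add: exp_minus[symmetric])

lemma cmod_omega_pow[simp]: "cmod (omega_pow d x) = 1"
  unfolding omega_pow_def by (simp add: norm_exp_eq_Re)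

lemma cnj_omega_pow: "cnj (omega_pow d x) = omega_pow d (- x)"
proof -
  have "cnj (omega_pow d x) * omega_pow d x = 1" using cmod_omega_pow[of d x]
    by (metis complex_norm_square mult.commute of_real_1 power_one)
  moreover have "omega_pow d x \<noteq> 0" unfolding omega_pow_def by simp
  ultimately show ?thesis by (simp add: omega_pow_minus field_simps)
qed

lemma trace_mat_mult:
  assumes "M \<in> carrier_mat d d"
  shows "mtrace d (mat d d f * M) = (\<Sum>a<d. \<Sum>c<d. f (a, c) * M $$ (c, a))"
  unfolding mtrace_def
proof (rule sum.cong[OF refl])
  fix a assume "a \<in> {..<d}"
  then have a: "a < d" by simp
  show "(mat d d f * M) $$ (a, a) = (\<Sum>c<d. f (a, c) * M $$ (c, a))"
    unfolding mult_entry[OF _ assms a a, of "mat d d f", simplified]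
    by (rule sum.cong[OF refl]) (simp add: a)
qed

lemma swap4:
  fixes X :: "'a \<Rightarrow> 'b \<Rightarrow> 'c \<Rightarrow> 'd \<Rightarrow> 'e::comm_monoid_add"
  shows "(\<Sum>a\<in>A. \<Sum>c\<in>C. \<Sum>j\<in>J. \<Sum>k\<in>K. X a c j k) = (\<Sum>j\<in>J. \<Sum>k\<in>K. \<Sum>a\<in>A. \<Sum>c\<in>C. X a c j k)"
proof -
  have "(\<Sum>a\<in>A. \<Sum>c\<in>C. \<Sum>j\<in>J. \<Sum>k\<in>K. X a c j k) = (\<Sum>a\<in>A. \<Sum>j\<in>J. \<Sum>c\<in>C. \<Sum>k\<in>K. X a c j k)"
    by (rule sum.cong[OF refl], rule sum.swap)
  also have "\<dots> = (\<Sum>j\<in>J. \<Sum>a\<in>A. \<Sum>c\<in>C. \<Sum>k\<in>K. X a c j k)" by (rule sum.swap)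
  also have "\<dots> = (\<Sum>j\<in>J. \<Sum>a\<in>A. \<Sum>k\<in>K. \<Sum>c\<in>C. X a c j k)"
    by (rule sum.cong[OF refl], rule sum.cong[OF refl], rule sum.swap)
  also have "\<dots> = (\<Sum>j\<in>J. \<Sum>k\<in>K. \<Sum>a\<in>A. \<Sum>c\<in>C. X a c j k)"
    by (rule sum.cong[OF refl], rule sum.swap)
  finally show ?thesis .
qed

lemma trace_rho:
  assumes "M \<in> carrier_mat d d"
  shows "mtrace d (rho_of d \<alpha> * M) = (\<Sum>j\<in>{0..d}. \<Sum>k\<in>{0..<d}.
            (pjk d \<alpha> j k - 1 / (of_nat d + 1)) * mtrace d (mub_proj d j k * M))"
proof -
  have car: "mub_proj d j k \<in> carrier_mat d d" for j k by (simp add: mub_proj_mvec)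
  have "mtrace d (rho_of d \<alpha> * M) = (\<Sum>a<d. \<Sum>c<d. \<Sum>j\<in>{0..d}. \<Sum>k\<in>{0..<d}.
          (pjk d \<alpha> j k - 1 / (of_nat d + 1)) * (mub_proj d j k $$ (a, c) * M $$ (c, a)))"
    unfolding rho_of_def trace_mat_mult[OF assms]
    by (simp add: sum_distrib_right mult.assoc)
  also have "\<dots> = (\<Sum>j\<in>{0..d}. \<Sum>k\<in>{0..<d}. \<Sum>a<d. \<Sum>c<d.
          (pjk d \<alpha> j k - 1 / (of_nat d + 1)) * (mub_proj d j k $$ (a, c) * M $$ (c, a)))"
    by (rule swap4)
  also have "\<dots> = (\<Sum>j\<in>{0..d}. \<Sum>k\<in>{0..<d}.
            (pjk d \<alpha> j k - 1 / (of_nat d + 1)) * mtrace d (mub_proj d j k * M))"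
  proof (intro sum.cong refl)
    fix j k
    have "mtrace d (mub_proj d j k * M) = (\<Sum>a<d. \<Sum>c<d. mub_proj d j k $$ (a, c) * M $$ (c, a))"
      unfolding mtrace_def
    proof (rule sum.cong[OF refl])
      fix a assume "a \<in> {..<d}"
      then show "(mub_proj d j k * M) $$ (a, a) = (\<Sum>c<d. mub_proj d j k $$ (a, c) * M $$ (c, a))"
        by (intro mult_entry[OF car assms]) auto
    qed
    then show "(\<Sum>a<d. \<Sum>c<d. (pjk d \<alpha> j k - 1 / (of_nat d + 1)) * (mub_proj d j k $$ (a, c) * M $$ (c, a)))
      = (pjk d \<alpha> j k - 1 / (of_nat d + 1)) * mtrace d (mub_proj d j k * M)"
      by (simp add: sum_distrib_left)
  qed
  finally show ?thesis .
qed


lemma omega_pow_nat2[simp]: "omega_pow d (real x * real r) = ee d (int x * int r)"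
  using omega_pow_nat[of d "x * r"] by simp

lemma sum_pjk: assumes d: "d > 0"
  shows "(\<Sum>k\<in>{0..<d}. pjk d \<alpha> j k) = 1"
proof -
  define C where "C = 1 / (of_nat d * complex_of_real (sqrt (real d + 1)))"
  have "(\<Sum>k\<in>{0..<d}. pjk d \<alpha> j k) = (\<Sum>k<d. 1 / of_nat d + C * (\<Sum>r\<in>{1..d-1}. omega_pow d (\<alpha> j r) * ee d (int k * int r)))"
    unfolding pjk_def C_def atLeast0LessThan
    by (intro sum.cong refl) (simp add: omega_pow_add omega_pow_nat)
  also have "\<dots> = 1 + C * (\<Sum>r\<in>{1..d-1}. omega_pow d (\<alpha> j r) * (\<Sum>k<d. ee d (int k * int r)))"
    using d by (simp add: sum.distrib sum_distrib_left sum_distrib_right mult.assoc sum.swap[of _ "{..<d}"])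
  also have "(\<Sum>r\<in>{1..d-1}. omega_pow d (\<alpha> j r) * (\<Sum>k<d. ee d (int k * int r))) = 0"
  proof (rule sum.neutral, rule ballI)
    fix r assume r: "r \<in> {1..d-1}"
    then have "\<not> int d dvd int r" using d by (auto simp: of_nat_dvd_iff dest: dvd_imp_le)
    then show "omega_pow d (\<alpha> j r) * (\<Sum>k<d. ee d (int k * int r)) = 0" by (simp add: ee_geom[OF d])
  qed
  finally show ?thesis by simp
qed

lemma trace_mub:
  assumes p: "prime d" and odd: "odd d" and j: "j \<le> d" "j' \<le> d" and k: "k < d" "k' < d"
  shows "mtrace d (mub_proj d j' k' * mub_proj d j k) = (if j' = j then (if k' = k then 1 else 0) else 1 / of_nat d)"
  unfolding mub_proj_mvec trace_proj using overlap[OF p odd j(2) j(1) k(2) k(1)] by simp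

lemma trace_rho_mub:
  assumes p: "prime d" and odd: "odd d" and j: "j \<le> d" and k: "k < d"
  shows "mtrace d (rho_of d \<alpha> * mub_proj d j k) = pjk d \<alpha> j k"
proof -
  have d: "d > 0" using odd by (cases d) auto
  define c where "c j' k' = pjk d \<alpha> j' k' - 1 / (of_nat d + 1)" for j' k'
  have csum: "(\<Sum>k'\<in>{0..<d}. c j' k') = 1 / (of_nat d + 1)" for j'
  proof -
    have "(\<Sum>k'\<in>{0..<d}. c j' k') = 1 - of_nat d / (of_nat d + 1)"
      unfolding c_def by (simp add: sum_subtractf sum_pjk[OF d])
    also have "\<dots> = 1 / (of_nat d + 1)"
    proof -
      have "(of_nat d + 1 :: complex) = of_nat (Suc d)" by simp
      moreover have "(of_nat (Suc d) :: complex) \<noteq> 0" by (simp only: of_nat_eq_0_iff)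
      ultimately have nz: "(of_nat d + 1 :: complex) \<noteq> 0" by metis
      then show ?thesis by (simp add: field_simps)
    qed
    finally show ?thesis .
  qed
  have "mtrace d (rho_of d \<alpha> * mub_proj d j k) = (\<Sum>j'\<in>{0..d}. \<Sum>k'\<in>{0..<d}.
            c j' k' * (if j' = j then (if k' = k then 1 else 0) else 1 / of_nat d))"
    unfolding trace_rho[OF proj_carrier[of d "mvec d j k", folded mub_proj_mvec]] c_def
    by (intro sum.cong refl) (simp add: trace_mub[OF p odd j _ k])
  also have "\<dots> = (\<Sum>k'\<in>{0..<d}. c j k' * (if k' = k then 1 else 0))
       + (\<Sum>j'\<in>{0..d} - {j}. \<Sum>k'\<in>{0..<d}. c j' k' * (1 / of_nat d))"
    using j by (subst sum.remove[of _ j]) (auto intro!: sum.cong)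
  also have "(\<Sum>k'\<in>{0..<d}. c j k' * (if k' = k then 1 else 0)) = c j k"
    using k by (simp add: sum.delta' if_distrib cong: if_cong)
  also have "(\<Sum>j'\<in>{0..d} - {j}. \<Sum>k'\<in>{0..<d}. c j' k' * (1 / of_nat d)) = (\<Sum>j'\<in>{0..d} - {j}. 1 / (of_nat d + 1) * (1 / of_nat d))"
    by (rule sum.cong[OF refl]) (simp only: sum_distrib_right[symmetric] csum)
  also have "\<dots> = of_nat d * (1 / (of_nat d + 1) * (1 / of_nat d))"
    using j by simp
  also have "c j k + \<dots> = pjk d \<alpha> j k" unfolding c_def using d by simp
  finally show ?thesis .
qed


lemma omega_pow_d: "d > 0 \<Longrightarrow> omega_pow d (x + real k * real d) = omega_pow d x"
  using omega_pow_add[of d x "real k * real d"] omega_pow_nat2[of d k d] ee_dmult[of d "int k"]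
  by (simp add: mult.commute)

lemma pjk_props:
  assumes d: "d > 0" and anti: "\<forall>r\<in>{1..d-1}. \<alpha> j (d - r) = - \<alpha> j r"
  shows "Im (pjk d \<alpha> j k) = 0 \<and>
         Re (pjk d \<alpha> j k) \<le> 1 / real d + (real d - 1) / real d * sqrt (1 / (real d + 1))"
proof -
  define f where "f r = omega_pow d (\<alpha> j r + real (k * r))" for r
  define S where "S = (\<Sum>r\<in>{1..d-1}. f r)"
  define c where "c = 1 / (real d * sqrt (real d + 1))"
  have pjk: "pjk d \<alpha> j k = complex_of_real (1 / real d) + complex_of_real c * S"
    unfolding pjk_def S_def f_def c_def by simp
  have "S = (\<Sum>r\<in>{1..d-1}. f (d - 1 + 1 - r))"
    unfolding S_def by (rule sum.atLeastAtMost_rev)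
  also have "\<dots> = (\<Sum>r\<in>{1..d-1}. cnj (f r))"
  proof (rule sum.cong[OF refl])
    fix r assume r: "r \<in> {1..d-1}"
    then have r': "d - 1 + 1 - r = d - r" "r \<le> d" by auto
    have "real (k * (d - r)) = - (real k * real r) + real k * real d" using r'(2)
      by (simp add: of_nat_diff algebra_simps)
    moreover have "\<alpha> j (d - r) = - \<alpha> j r" using anti r by blast
    ultimately have "\<alpha> j (d - r) + real (k * (d - r)) = - (\<alpha> j r + real k * real r) + real k * real d"
      by linarith
    then have "f (d - r) = omega_pow d (- (\<alpha> j r + real k * real r) + real k * real d)"
      unfolding f_def by (simp only:)
    also have "\<dots> = cnj (f r)" unfolding f_def using d by (simp add: omega_pow_d cnj_omega_pow)
    finally show "f (d - 1 + 1 - r) = cnj (f r)" using r'(1) by simp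
  qed
  also have "\<dots> = cnj S" unfolding S_def by simp
  finally have Sc: "S = cnj S" .
  then have ImS: "Im S = 0" by (metis complex_cnj_cancel_iff complex_eq_iff complex_cnj_complex_of_real
       Im_complex_of_real cnj.sel(2) neg_equal_zero)
  have "cmod S \<le> (\<Sum>r\<in>{1..d-1}. cmod (f r))" unfolding S_def by (rule norm_sum)
  also have "\<dots> = real d - 1" using d unfolding f_def by (simp add: of_nat_diff)
  finally have ReS: "Re S \<le> real d - 1" using complex_Re_le_cmod[of S] by linarith
  have c0: "c \<ge> 0" unfolding c_def by simp
  have "Re (pjk d \<alpha> j k) = 1 / real d + c * Re S" unfolding pjk by simp
  also have "\<dots> \<le> 1 / real d + c * (real d - 1)" using ReS c0 by (simp add: mult_left_mono)
  also have "c * (real d - 1) = (real d - 1) / real d * sqrt (1 / (real d + 1))"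
    unfolding c_def by (simp add: real_sqrt_divide field_simps)
  finally show ?thesis unfolding pjk using ImS by simp
qed



lemma displ_ip:
  assumes phi: "\<phi> \<in> carrier_vec d"
  shows "conjugate \<phi> \<bullet> (displ d (t, p2) *\<^sub>v \<phi>)
     = tau d ^ (t * p2) * (\<Sum>b<d. cnj (\<phi> $ ((b + t) mod d)) * ee d (int b * int p2) * \<phi> $ b)"
proof -
  have "conjugate \<phi> \<bullet> (displ d (t, p2) *\<^sub>v \<phi>) = (\<Sum>a<d. cnj (\<phi> $ a) * (displ d (t, p2) *\<^sub>v \<phi>) $ a)"
    unfolding scalar_prod_def using phi by (simp add: lessThan_atLeast0)
  also have "\<dots> = (\<Sum>a<d. \<Sum>b<d. cnj (\<phi> $ a) * ((if a = (b + t) mod d then tau d ^ (t * p2) * ee d (int b * int p2) else 0) * \<phi> $ b))"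
  proof (rule sum.cong[OF refl])
    fix a assume "a \<in> {..<d}"
    then have a: "a < d" by simp
    show "cnj (\<phi> $ a) * (displ d (t, p2) *\<^sub>v \<phi>) $ a = (\<Sum>b<d. cnj (\<phi> $ a) * ((if a = (b + t) mod d then tau d ^ (t * p2) * ee d (int b * int p2) else 0) * \<phi> $ b))"
      by (subst displ_vec[OF a phi]) (simp add: sum_distrib_left)
  qed
  also have "\<dots> = (\<Sum>b<d. \<Sum>a<d. if a = (b + t) mod d then cnj (\<phi> $ a) * (tau d ^ (t * p2) * ee d (int b * int p2) * \<phi> $ b) else 0)"
    by (subst sum.swap) (intro sum.cong refl, simp)
  also have "\<dots> = (\<Sum>b<d. cnj (\<phi> $ ((b + t) mod d)) * (tau d ^ (t * p2) * ee d (int b * int p2) * \<phi> $ b))"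
  proof (rule sum.cong[OF refl])
    fix b assume "b \<in> {..<d}"
    then have "(b + t) mod d < d" by simp
    then show "(\<Sum>a<d. if a = (b + t) mod d then cnj (\<phi> $ a) * (tau d ^ (t * p2) * ee d (int b * int p2) * \<phi> $ b) else 0)
        = cnj (\<phi> $ ((b + t) mod d)) * (tau d ^ (t * p2) * ee d (int b * int p2) * \<phi> $ b)"
      by (rule sum_delta_lt)
  qed
  also have "\<dots> = tau d ^ (t * p2) * (\<Sum>b<d. cnj (\<phi> $ ((b + t) mod d)) * ee d (int b * int p2) * \<phi> $ b)"
    by (simp add: sum_distrib_left algebra_simps)
  finally show ?thesis .
qed

lemma cmod_tau: "odd d \<Longrightarrow> cmod (tau d ^ n) = 1"
  by (simp add: tau_pow)

lemma fourier_bound: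
  fixes x :: real and Z :: "nat \<Rightarrow> complex"
  assumes d: "d > 0" and eq: "complex_of_real (real d * x) = (\<Sum>t<d. Z t)" and Z0: "Z 0 = 1"
    and Zt: "\<And>t. 0 < t \<Longrightarrow> t < d \<Longrightarrow> (cmod (Z t))\<^sup>2 = 1 / (real d + 1)"
  shows "x \<le> 1 / real d + (real d - 1) / real d * sqrt (1 / (real d + 1))"
proof -
  have Zt': "cmod (Z t) = sqrt (1 / (real d + 1))" if "0 < t" "t < d" for t
    using Zt[OF that] by (metis norm_ge_zero real_sqrt_unique)
  have "real d * x \<le> cmod (complex_of_real (real d * x))"
    using complex_Re_le_cmod[of "complex_of_real (real d * x)"] by (simp only: Re_complex_of_real)
  also have "\<dots> \<le> (\<Sum>t<d. cmod (Z t))" unfolding eq by (rule norm_sum)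
  also have "(\<Sum>t<d. cmod (Z t)) = cmod (Z 0) + (\<Sum>t\<in>{1..<d}. cmod (Z t))"
  proof -
    have "{..<d} = insert 0 {1..<d}" using d by auto
    then show ?thesis by simp
  qed
  also have "(\<Sum>t\<in>{1..<d}. cmod (Z t)) = (\<Sum>t\<in>{1..<d}. sqrt (1 / (real d + 1)))"
    by (rule sum.cong) (auto intro: Zt')
  also have "\<dots> = (real d - 1) * sqrt (1 / (real d + 1))" using d by (simp add: of_nat_diff)
  finally have "real d * x \<le> 1 + (real d - 1) * sqrt (1 / (real d + 1))" using Z0 by simp
  then show ?thesis using d by (simp add: field_simps)
qed


lemma dvd_diff_lt: assumes "b < d" "k < d" shows "int d dvd (int b - int k) \<longleftrightarrow> b = k"
proof
  assume dv: "int d dvd (int b - int k)"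
  show "b = k"
  proof (rule ccontr)
    assume "b \<noteq> k"
    then have "int b - int k \<noteq> 0" by simp
    from dvd_imp_le_int[OF this dv] show False using assms by arith
  qed
qed simp

lemma cnj_mult_self: "cnj (z::complex) * z = complex_of_real ((cmod z)\<^sup>2)"
  by (simp only: complex_norm_square mult.commute)

lemma fid_unitnorm: fixes \<phi> :: "complex vec" assumes "fiducial d \<phi>" shows "(\<Sum>b<d. cnj (\<phi> $ b) * \<phi> $ b) = 1"
proof -
  have "(\<Sum>b<d. cnj (\<phi> $ b) * \<phi> $ b) = complex_of_real (\<Sum>b<d. (cmod (\<phi> $ b))\<^sup>2)"
    by (simp add: cnj_mult_self)
  also have "(\<Sum>b<d. (cmod (\<phi> $ b))\<^sup>2) = 1" using assms unfolding fiducial_def unit_vec_d_def by blast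
  finally show ?thesis by simp
qed

lemma fid_case_d:
  fixes \<phi> :: "complex vec"
  assumes odd: "odd d" and fid: "fiducial d \<phi>" and k: "k < d"
  shows "(cmod (\<phi> $ k))\<^sup>2 \<le> 1 / real d + (real d - 1) / real d * sqrt (1 / (real d + 1))"
proof -
  have d: "d > 0" using odd by (cases d) auto
  have phi: "\<phi> \<in> carrier_vec d" using fid unfolding fiducial_def unit_vec_d_def by blast
  define W where "W t = conjugate \<phi> \<bullet> (displ d (0, t) *\<^sub>v \<phi>)" for t
  have W: "W t = (\<Sum>b<d. cnj (\<phi> $ b) * \<phi> $ b * ee d (int b * int t))" if "t < d" for t
  proof -
    have "W t = tau d ^ (0 * t) * (\<Sum>b<d. cnj (\<phi> $ ((b + 0) mod d)) * ee d (int b * int t) * \<phi> $ b)"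
      unfolding W_def by (rule displ_ip[OF phi])
    also have "\<dots> = (\<Sum>b<d. cnj (\<phi> $ b) * \<phi> $ b * ee d (int b * int t))"
      by (simp, intro sum.cong refl, simp)
    finally show ?thesis .
  qed
  define Z where "Z t = ee d (- (int k * int t)) * W t" for t
  have "(\<Sum>t<d. Z t) = (\<Sum>t<d. \<Sum>b<d. cnj (\<phi> $ b) * \<phi> $ b * ee d (int t * (int b - int k)))"
  proof (rule sum.cong[OF refl])
    fix t assume "t \<in> {..<d}"
    then have t: "t < d" by simp
    show "Z t = (\<Sum>b<d. cnj (\<phi> $ b) * \<phi> $ b * ee d (int t * (int b - int k)))"
      unfolding Z_def W[OF t] sum_distrib_left
      by (rule sum.cong[OF refl]) (simp add: ee_add[symmetric] algebra_simps)
  qed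
  also have "\<dots> = (\<Sum>b<d. cnj (\<phi> $ b) * \<phi> $ b * (\<Sum>t<d. ee d (int t * (int b - int k))))"
    by (subst sum.swap) (simp add: sum_distrib_left)
  also have "\<dots> = (\<Sum>b<d. if b = k then cnj (\<phi> $ b) * \<phi> $ b * of_nat d else 0)"
    by (rule sum.cong[OF refl]) (simp add: ee_geom[OF d] dvd_diff_lt k)
  also have "\<dots> = cnj (\<phi> $ k) * \<phi> $ k * of_nat d" using k by (rule sum_delta_lt)
  also have "\<dots> = complex_of_real (real d * (cmod (\<phi> $ k))\<^sup>2)" by (simp add: cnj_mult_self)
  finally have eq: "complex_of_real (real d * (cmod (\<phi> $ k))\<^sup>2) = (\<Sum>t<d. Z t)" by simp
  have Z0: "Z 0 = 1" unfolding Z_def using W[OF d] fid_unitnorm[OF fid] by simp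
  have Zt: "(cmod (Z t))\<^sup>2 = 1 / (real d + 1)" if "0 < t" "t < d" for t
  proof -
    have "(cmod (W t))\<^sup>2 = 1 / (real d + 1)"
      using fid that d unfolding fiducial_def W_def by auto
    then show ?thesis unfolding Z_def by (simp add: norm_mult)
  qed
  show ?thesis by (rule fourier_bound[OF d eq Z0 Zt])
qed


definition Phi :: "nat \<Rightarrow> complex vec \<Rightarrow> int \<Rightarrow> complex" where
  "Phi d \<phi> x = \<phi> $ nat (x mod int d)"

lemma Phi_nat: "b < d \<Longrightarrow> Phi d \<phi> (int b) = \<phi> $ b"
  unfolding Phi_def by simp

lemma Phi_shift: "d > 0 \<Longrightarrow> Phi d \<phi> (int b + int t) = \<phi> $ ((b + t) mod d)"
  unfolding Phi_def by (metis nat_int of_nat_add zmod_int)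

lemma Phi_periodic: "d > 0 \<Longrightarrow> Phi d \<phi> (x + int d) = Phi d \<phi> x"
  unfolding Phi_def by simp

lemma EE_add: "EE d j k (x + y) = EE d j k x + EE d j k y + int j * x * y"
  unfolding EE_def by (simp add: TT_add algebra_simps)

lemma fid_case_j:
  fixes \<phi> :: "complex vec"
  assumes p: "prime d" and odd: "odd d" and fid: "fiducial d \<phi>" and j: "j < d" and k: "k < d"
  shows "(cmod (ip d \<phi> (mvec d j k)))\<^sup>2 \<le> 1 / real d + (real d - 1) / real d * sqrt (1 / (real d + 1))"
proof -
  have d: "d > 0" using odd by (cases d) auto
  have jd: "j \<noteq> d" using j by simp
  have phi: "\<phi> \<in> carrier_vec d" using fid unfolding fiducial_def unit_vec_d_def by blast
  define E where "E = EE d j k"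
  define v0 where "v0 = mvec d j k $ 0"
  define \<psi> where "\<psi> x = Phi d \<phi> x * ee d (- E x)" for x
  define S where "S = (\<Sum>b<d. \<psi> (int b))"
  have "ip d \<phi> (mvec d j k) = (\<Sum>b<d. v0 * cnj (\<psi> (int b)))"
    unfolding ip_def
  proof (rule sum.cong[OF refl])
    fix b assume "b \<in> {..<d}"
    then have b: "b < d" by simp
    show "cnj (\<phi> $ b) * mvec d j k $ b = v0 * cnj (\<psi> (int b))"
      unfolding mvec_form[OF odd jd b] \<psi>_def v0_def E_def Phi_nat[OF b]
      by (simp add: cnj_ee)
  qed
  also have "\<dots> = v0 * cnj S" unfolding S_def by (simp add: sum_distrib_left)
  finally have ipS: "ip d \<phi> (mvec d j k) = v0 * cnj S" .
  have x_eq: "(cmod (ip d \<phi> (mvec d j k)))\<^sup>2 = 1 / real d * (cmod S)\<^sup>2"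
    unfolding ipS using mvec_0[OF odd jd, of k] by (simp add: norm_mult power_mult_distrib v0_def)
  define Z where "Z t = (\<Sum>b<d. cnj (\<psi> (int b)) * \<psi> (int b + int t))" for t
  have psi_per: "\<psi> (x + int d) = \<psi> x" for x
    unfolding \<psi>_def E_def using Phi_periodic[OF d] EE_periodic[OF odd] by (simp add: ee_minus)
  have "cnj S * S = (\<Sum>b<d. \<Sum>c<d. cnj (\<psi> (int b)) * \<psi> (int c))"
    unfolding S_def cnj_sum sum_product by simp
  also have "\<dots> = (\<Sum>b<d. \<Sum>t<d. cnj (\<psi> (int b)) * \<psi> (int b + int t))"
  proof (rule sum.cong[OF refl])
    fix b
    show "(\<Sum>c<d. cnj (\<psi> (int b)) * \<psi> (int c)) = (\<Sum>t<d. cnj (\<psi> (int b)) * \<psi> (int b + int t))"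
      using sum_shift[OF d, of "\<lambda>x. cnj (\<psi> (int b)) * \<psi> x" "int b"] psi_per by simp
  qed
  also have "\<dots> = (\<Sum>t<d. Z t)" unfolding Z_def by (rule sum.swap)
  finally have SZ: "cnj S * S = (\<Sum>t<d. Z t)" .
  have eq: "complex_of_real (real d * (cmod (ip d \<phi> (mvec d j k)))\<^sup>2) = (\<Sum>t<d. Z t)"
    unfolding x_eq SZ[symmetric] cnj_mult_self using d by simp
  have Z0: "Z 0 = 1"
  proof -
    have "Z 0 = (\<Sum>b<d. cnj (\<phi> $ b) * \<phi> $ b)"
      unfolding Z_def
    proof (rule sum.cong[OF refl])
      fix b assume "b \<in> {..<d}"
      then have b: "b < d" by simp
      have "cnj (ee d (- E (int b))) * ee d (- E (int b)) = 1"
        by (simp add: cnj_mult_self)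
      then show "cnj (\<psi> (int b)) * \<psi> (int b + int 0) = cnj (\<phi> $ b) * \<phi> $ b"
        unfolding \<psi>_def by (simp add: algebra_simps Phi_nat[OF b])
    qed
    then show ?thesis using fid_unitnorm[OF fid] by simp
  qed
  have Zt: "(cmod (Z t))\<^sup>2 = 1 / (real d + 1)" if t: "0 < t" "t < d" for t
  proof -
    define I where "I = (\<Sum>b<d. cnj (\<phi> $ b) * Phi d \<phi> (int b + int t) * ee d (- (int b * int j * int t)))"
    have ZI: "Z t = ee d (- E (int t)) * I"
      unfolding Z_def I_def sum_distrib_left
    proof (rule sum.cong[OF refl])
      fix b assume "b \<in> {..<d}"
      then have b: "b < d" by simp
      have "cnj (ee d (- E (int b))) * ee d (- E (int b + int t)) = ee d (- E (int t)) * ee d (- (int b * int j * int t))"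
        unfolding E_def EE_add cnj_ee ee_add[symmetric] by (simp add: algebra_simps)
      then show "cnj (\<psi> (int b)) * \<psi> (int b + int t)
          = ee d (- E (int t)) * (cnj (\<phi> $ b) * Phi d \<phi> (int b + int t) * ee d (- (int b * int j * int t)))"
        unfolding \<psi>_def Phi_nat[OF b]
        by (simp add: algebra_simps)
    qed
    define W where "W = conjugate \<phi> \<bullet> (displ d (t, (j * t) mod d) *\<^sub>v \<phi>)"
    have "W = tau d ^ (t * ((j * t) mod d)) * (\<Sum>b<d. cnj (\<phi> $ ((b + t) mod d)) * ee d (int b * int ((j * t) mod d)) * \<phi> $ b)"
      unfolding W_def by (rule displ_ip[OF phi])
    also have "(\<Sum>b<d. cnj (\<phi> $ ((b + t) mod d)) * ee d (int b * int ((j * t) mod d)) * \<phi> $ b) = cnj I"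
      unfolding I_def cnj_sum
    proof (rule sum.cong[OF refl])
      fix b assume "b \<in> {..<d}"
      have "ee d (int b * int ((j * t) mod d)) = ee d (int b * int j * int t)"
      proof (rule ee_cong[OF d])
        have "int ((j * t) mod d) = (int j * int t) mod int d" by (simp add: zmod_int)
        then show "int b * int ((j * t) mod d) mod int d = int b * int j * int t mod int d"
          by (simp add: mod_mult_right_eq mult.assoc)
      qed
      then show "cnj (\<phi> $ ((b + t) mod d)) * ee d (int b * int ((j * t) mod d)) * \<phi> $ b
          = cnj (cnj (\<phi> $ b) * Phi d \<phi> (int b + int t) * ee d (- (int b * int j * int t)))"
        by (simp add: Phi_shift[OF d] cnj_ee)
    qed
    finally have WI: "cmod W = cmod I" using cmod_tau[OF odd] by (simp add: norm_mult)
    have "(cmod W)\<^sup>2 = 1 / (real d + 1)"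
      using fid t d unfolding fiducial_def W_def by auto
    then show ?thesis unfolding ZI using WI by (simp add: norm_mult)
  qed
  show ?thesis by (rule fourier_bound[OF d eq Z0 Zt])
qed


theorem mainTheorem4:
  fixes d :: nat
  assumes "prime d" and "odd d"
  shows "(\<forall>\<rho>\<in>Omega d. \<forall>j\<le>d. \<forall>k<d.
            Im (mtrace d (\<rho> * mub_proj d j k)) = 0 \<and>
            Re (mtrace d (\<rho> * mub_proj d j k))
              \<le> 1 / real d + (real d - 1) / real d * sqrt (1 / (real d + 1)))
       \<and> (\<forall>\<phi>. fiducial d \<phi> \<longrightarrow> (\<forall>j\<le>d. \<forall>k<d.
            Im (mtrace d (proj d \<phi> * mub_proj d j k)) = 0 \<and>
            Re (mtrace d (proj d \<phi> * mub_proj d j k))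
              \<le> 1 / real d + (real d - 1) / real d * sqrt (1 / (real d + 1))))"
proof (intro conjI ballI allI impI)
  have d: "d > 0" using assms(2) by (cases d) auto
  fix \<rho> j k assume rho: "\<rho> \<in> Omega d" and j: "j \<le> d" and k: "k < d"
  from rho obtain \<alpha> where r: "\<rho> = rho_of d \<alpha>" and anti: "\<forall>j\<le>d. \<forall>r\<in>{1..d-1}. \<alpha> j (d - r) = - \<alpha> j r"
    unfolding Omega_def by blast
  have tr: "mtrace d (\<rho> * mub_proj d j k) = pjk d \<alpha> j k"
    unfolding r by (rule trace_rho_mub[OF assms j k])
  have "\<forall>r\<in>{1..d-1}. \<alpha> j (d - r) = - \<alpha> j r" using anti j by blast
  from pjk_props[where \<alpha>=\<alpha> and j=j and k=k, OF d this]
  show "Im (mtrace d (\<rho> * mub_proj d j k)) = 0"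
    and "Re (mtrace d (\<rho> * mub_proj d j k)) \<le> 1 / real d + (real d - 1) / real d * sqrt (1 / (real d + 1))"
    unfolding tr by auto
next
  fix \<phi> :: "complex vec" and j k assume fid: "fiducial d \<phi>" and j: "j \<le> d" and k: "k < d"
  have tr: "mtrace d (proj d \<phi> * mub_proj d j k) = complex_of_real ((cmod (ip d \<phi> (mvec d j k)))\<^sup>2)"
    unfolding mub_proj_mvec by (rule trace_proj)
  show "Im (mtrace d (proj d \<phi> * mub_proj d j k)) = 0" unfolding tr by simp
  have "(cmod (ip d \<phi> (mvec d j k)))\<^sup>2 \<le> 1 / real d + (real d - 1) / real d * sqrt (1 / (real d + 1))"
  proof (cases "j = d")
    case True
    have "ip d \<phi> (mvec d j k) = (\<Sum>b<d. if b = k then cnj (\<phi> $ b) else 0)"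
      unfolding ip_def mvec_def using True k by (intro sum.cong refl) (auto simp: index_unit_vec)
    also have "\<dots> = cnj (\<phi> $ k)" using k by (rule sum_delta_lt)
    finally show ?thesis using fid_case_d[OF assms(2) fid k] by simp
  next
    case False
    then have "j < d" using j by simp
    then show ?thesis by (rule fid_case_j[OF assms fid _ k])
  qed
  then show "Re (mtrace d (proj d \<phi> * mub_proj d j k)) \<le> 1 / real d + (real d - 1) / real d * sqrt (1 / (real d + 1))"
    unfolding tr by simp
qed


end
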